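(* Let $p\in[1,\infty)$ and suppose $\lim_{|x|\to\infty}\int_{-\infty}^{\infty}G(x,t)\,dt=0$. For $f\in L_p(\mathbb R)$ put $y_f=Gf$. Then $$\lim_{\eta\to0}\ \sup_{\|f\|_p\le1}\|y_f(\cdot+\eta)-y_f(\cdot)\|_p=0.$$
   Context: Let $q:\mathbb R\to\mathbb R$ be measurable with $q\in L_1^{\mathrm{loc}}(\mathbb R)$ and $q(x)\ge1$ a.e. A principal fundamental system of solutions (PFSS) of $z''=q(x)z$ is a pair $u,v$ of solutions ($C^1$, derivative locally absolutely continuous, equation a.e.) such that for all $x$: $u>0$, $v>0$, $u'<0$, $v'>0$, $v'u-u'v=1$, $u(x)=v(x)\int_x^\infty v(t)^{-2}dt$, and $u,u'\to0$ as $x\to\infty$, $v,v'\to0$ as $x\to-\infty$, $v,v'\to\infty$ as $x\to\infty$, $u,|u'|\to\infty$ as $x\to-\infty$. Fix a PFSS $\{u,v\}$. The Green function is $G(x,t)=u(x)v(t)$ for $x\ge t$ and $G(x,t)=u(t)v(x)$ for $x\le t$, and $(Gf)(x)=\int_{-\infty}^\infty G(x,t)f(t)\,dt$. *)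

theory Defs
  imports "HOL-Analysis.Analysis"
begin

definition admissible_q :: "(real \<Rightarrow> real) \<Rightarrow> bool" where
  "admissible_q q \<longleftrightarrow> q \<in> borel_measurable lborel
     \<and> (\<forall>a b. set_integrable lborel {a..b} q)
     \<and> (AE x in lborel. 1 \<le> q x)"

text \<open>z is a solution of z'' = q z with derivative z': z is C^1 with derivative z',
  and z' is locally absolutely continuous with z'' = q z a.e., i.e. z' is the
  indefinite integral of q z.\<close>
definition is_solution :: "(real \<Rightarrow> real) \<Rightarrow> (real \<Rightarrow> real) \<Rightarrow> (real \<Rightarrow> real) \<Rightarrow> bool" where
  "is_solution q z z' \<longleftrightarrow>
     (\<forall>x. (z has_real_derivative z' x) (at x)) \<and> continuous_on UNIV z'
     \<and> (\<forall>a b. set_integrable lborel {a..b} (\<lambda>t. q t * z t))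
     \<and> (\<forall>a x. z' x - z' a = (LBINT t=a..x. q t * z t))"

definition PFSS :: "(real \<Rightarrow> real) \<Rightarrow> (real \<Rightarrow> real) \<Rightarrow> (real \<Rightarrow> real)
                     \<Rightarrow> (real \<Rightarrow> real) \<Rightarrow> (real \<Rightarrow> real) \<Rightarrow> bool" where
  "PFSS q u u' v v' \<longleftrightarrow>
     is_solution q u u' \<and> is_solution q v v'
     \<and> (\<forall>x. u x > 0 \<and> v x > 0 \<and> u' x < 0 \<and> v' x > 0 \<and> v' x * u x - u' x * v x = 1)
     \<and> (\<forall>x. set_integrable lborel {x..} (\<lambda>t. 1 / (v t)\<^sup>2)
            \<and> u x = v x * (\<integral>t\<in>{x..}. 1 / (v t)\<^sup>2 \<partial>lborel))
     \<and> (u \<longlongrightarrow> 0) at_top \<and> (u' \<longlongrightarrow> 0) at_top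
     \<and> (v \<longlongrightarrow> 0) at_bot \<and> (v' \<longlongrightarrow> 0) at_bot
     \<and> filterlim v at_top at_top \<and> filterlim v' at_top at_top
     \<and> filterlim u at_top at_bot \<and> filterlim (\<lambda>x. \<bar>u' x\<bar>) at_top at_bot"

definition green :: "(real \<Rightarrow> real) \<Rightarrow> (real \<Rightarrow> real) \<Rightarrow> real \<Rightarrow> real \<Rightarrow> real" where
  "green u v x t = (if t \<le> x then u x * v t else u t * v x)"

definition green_op :: "(real \<Rightarrow> real) \<Rightarrow> (real \<Rightarrow> real) \<Rightarrow> (real \<Rightarrow> real) \<Rightarrow> real \<Rightarrow> real" where
  "green_op u v f x = (\<integral>t. green u v x t * f t \<partial>lborel)"

text \<open>p-th power of the L_p norm, as an extended nonnegative real
  (so \<open>Lp_pow p g \<le> c^p\<close> iff \<open>\<parallel>g\<parallel>_p \<le> c\<close>, including the value \<infinity>).\<close>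
definition Lp_pow :: "real \<Rightarrow> (real \<Rightarrow> real) \<Rightarrow> ennreal" where
  "Lp_pow p g = (\<integral>\<^sup>+x. ennreal (\<bar>g x\<bar> powr p) \<partial>lborel)"

end

theory Submission
  imports Defs
begin


context
  fixes q u u' v v' :: "real \<Rightarrow> real"
  assumes adm: "admissible_q q" and P: "PFSS q u u' v v'"
begin

lemma solu: "is_solution q u u'" and solv: "is_solution q v v'"
  using P by (auto simp: PFSS_def)

lemma pos: "u x > 0" "v x > 0" "u' x < 0" "v' x > 0"
  using P by (auto simp: PFSS_def)

lemma derivs: "(u has_real_derivative u' x) (at x)" "(v has_real_derivative v' x) (at x)"
  using solu solv by (auto simp: is_solution_def)

lemma cont: "continuous_on UNIV u" "continuous_on UNIV v"
  using derivs by (auto intro!: continuous_at_imp_continuous_on DERIV_isCont)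

lemma meas: "u \<in> borel_measurable borel" "v \<in> borel_measurable borel"
  using cont by (auto intro: borel_measurable_continuous_onI)

lemma u_dec: "x \<le> y \<Longrightarrow> u y \<le> u x"
proof (cases "x = y")
  case False
  assume "x \<le> y" with False have "x < y" by simp
  then show ?thesis
    using DERIV_neg_imp_decreasing[of x y u] derivs pos by (meson less_imp_le)
qed simp

lemma v_inc: "x \<le> y \<Longrightarrow> v x \<le> v y"
proof (cases "x = y")
  case False
  assume "x \<le> y" with False have "x < y" by simp
  then show ?thesis
    using DERIV_pos_imp_increasing[of x y v] derivs pos by (meson less_imp_le)
qed simp

end


lemma nn_halfline_left:
  fixes f :: "real \<Rightarrow> ennreal"
  assumes [measurable]: "f \<in> borel_measurable borel"
    and le: "\<And>a. a \<le> x \<Longrightarrow> (\<integral>\<^sup>+t. f t * indicator {a..x} t \<partial>lborel) \<le> C"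
  shows "(\<integral>\<^sup>+t. f t * indicator {..x} t \<partial>lborel) \<le> C"
proof -
  let ?F = "\<lambda>n::nat. \<lambda>t. f t * indicator {x - real n..x} t"
  have inc: "incseq ?F"
  proof (intro incseq_SucI le_funI)
    fix n t
    show "?F n t \<le> ?F (Suc n) t"
      by (cases "t \<in> {x - real n..x}") (auto simp: indicator_def)
  qed
  have "(\<integral>\<^sup>+t. f t * indicator {..x} t \<partial>lborel) \<le> (\<integral>\<^sup>+t. (SUP n. ?F n t) \<partial>lborel)"
  proof (rule nn_integral_mono)
    fix t
    show "f t * indicator {..x} t \<le> (SUP n. ?F n t)"
    proof (cases "t \<le> x")
      case True
      obtain n :: nat where "x - t \<le> real n" using real_arch_simple by blast
      then have "t \<in> {x - real n..x}" using True by auto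
      then have "f t * indicator {..x} t = ?F n t" using True by (simp add: indicator_def)
      then show ?thesis using SUP_upper[of n UNIV "\<lambda>n. ?F n t"] by simp
    qed (simp add: indicator_def)
  qed
  also have "\<dots> = (SUP n. (\<integral>\<^sup>+t. ?F n t \<partial>lborel))"
  proof -
    have m: "\<And>n. ?F n \<in> borel_measurable lborel" by simp
    show ?thesis using nn_integral_monotone_convergence_SUP[OF inc m] by simp
  qed
  also have "\<dots> \<le> C"
    by (rule SUP_least) (rule le, simp)
  finally show ?thesis .
qed

lemma nn_halfline_right:
  fixes f :: "real \<Rightarrow> ennreal"
  assumes [measurable]: "f \<in> borel_measurable borel"
    and le: "\<And>b. x \<le> b \<Longrightarrow> (\<integral>\<^sup>+t. f t * indicator {x..b} t \<partial>lborel) \<le> C"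
  shows "(\<integral>\<^sup>+t. f t * indicator {x..} t \<partial>lborel) \<le> C"
proof -
  let ?F = "\<lambda>n::nat. \<lambda>t. f t * indicator {x..x + real n} t"
  have inc: "incseq ?F"
  proof (intro incseq_SucI le_funI)
    fix n t
    show "?F n t \<le> ?F (Suc n) t"
      by (cases "t \<in> {x..x + real n}") (auto simp: indicator_def)
  qed
  have "(\<integral>\<^sup>+t. f t * indicator {x..} t \<partial>lborel) \<le> (\<integral>\<^sup>+t. (SUP n. ?F n t) \<partial>lborel)"
  proof (rule nn_integral_mono)
    fix t
    show "f t * indicator {x..} t \<le> (SUP n. ?F n t)"
    proof (cases "x \<le> t")
      case True
      obtain n :: nat where "t - x \<le> real n" using real_arch_simple by blast
      then have "t \<in> {x..x + real n}" using True by auto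
      then have "f t * indicator {x..} t = ?F n t" using True by (simp add: indicator_def)
      then show ?thesis using SUP_upper[of n UNIV "\<lambda>n. ?F n t"] by simp
    qed (simp add: indicator_def)
  qed
  also have "\<dots> = (SUP n. (\<integral>\<^sup>+t. ?F n t \<partial>lborel))"
  proof -
    have m: "\<And>n. ?F n \<in> borel_measurable lborel" by simp
    show ?thesis using nn_integral_monotone_convergence_SUP[OF inc m] by simp
  qed
  also have "\<dots> \<le> C"
    by (rule SUP_least) (rule le, simp)
  finally show ?thesis .
qed

context
  fixes q u u' v v' :: "real \<Rightarrow> real"
  assumes adm: "admissible_q q" and P: "PFSS q u u' v v'"
begin

lemma q_props: "q \<in> borel_measurable borel" "AE x in lborel. 1 \<le> q x"
  "\<And>a b. set_integrable lborel {a..b} q"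
  using adm by (auto simp: admissible_q_def)

lemma int_qz:
  assumes sol: "is_solution q z z'" and pz: "\<And>t. z t > 0" and zc: "continuous_on UNIV z" and "a \<le> b"
  shows "(\<integral>\<^sup>+t. ennreal (z t) * indicator {a..b} t \<partial>lborel) \<le> ennreal (z' b - z' a)"
proof -
  have zm[measurable]: "z \<in> borel_measurable borel" using zc by (rule borel_measurable_continuous_onI)
  have qm[measurable]: "q \<in> borel_measurable borel" using q_props by simp
  have si: "set_integrable lborel {a..b} (\<lambda>t. q t * z t)" using sol by (auto simp: is_solution_def)
  have eq: "z' b - z' a = (LINT t:{a..b}|lborel. q t * z t)"
    using sol \<open>a \<le> b\<close> by (auto simp: is_solution_def interval_integral_Icc)
  have "(\<integral>\<^sup>+t. ennreal (z t) * indicator {a..b} t \<partial>lborel)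
      \<le> (\<integral>\<^sup>+t. ennreal (indicator {a..b} t *\<^sub>R (q t * z t)) \<partial>lborel)"
  proof (rule nn_integral_mono_AE)
    show "AE t in lborel. ennreal (z t) * indicator {a..b} t \<le> ennreal (indicator {a..b} t *\<^sub>R (q t * z t))"
      using q_props(2)
    proof eventually_elim
      case (elim t)
      have "z t \<le> q t * z t" using elim pz[of t] by (simp add: mult_le_cancel_right1)
      then show ?case by (auto split: split_indicator intro: ennreal_leI)
    qed
  qed
  also have "\<dots> = ennreal (LINT t:{a..b}|lborel. q t * z t)"
    unfolding set_lebesgue_integral_def
  proof (rule nn_integral_eq_integral)
    show "integrable lborel (\<lambda>t. indicator {a..b} t *\<^sub>R (q t * z t))"
      using si by (simp add: set_integrable_def)
    show "AE t in lborel. 0 \<le> indicator {a..b} t *\<^sub>R (q t * z t)"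
      using q_props(2)
    proof eventually_elim
      case (elim t)
      then show ?case using pz[of t] by (simp add: indicator_def)
    qed
  qed
  finally show ?thesis unfolding eq .
qed

end


context
  fixes q u u' v v' :: "real \<Rightarrow> real"
  assumes adm: "admissible_q q" and P: "PFSS q u u' v v'"
begin


lemma Av_le: "(\<integral>\<^sup>+t. ennreal (v t) * indicator {..x} t \<partial>lborel) \<le> ennreal (v' x)"
proof (rule nn_halfline_left)
  show "(\<lambda>t. ennreal (v t)) \<in> borel_measurable borel" using meas[OF adm P] by measurable
  fix a assume "a \<le> x"
  have "(\<integral>\<^sup>+t. ennreal (v t) * indicator {a..x} t \<partial>lborel) \<le> ennreal (v' x - v' a)"
    by (rule int_qz[OF adm P solv[OF adm P] _ cont(2)[OF adm P] \<open>a \<le> x\<close>]) (use pos[OF adm P] in auto)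
  also have "\<dots> \<le> ennreal (v' x)" using pos(4)[OF adm P, of a] by (intro ennreal_leI) simp
  finally show "(\<integral>\<^sup>+t. ennreal (v t) * indicator {a..x} t \<partial>lborel) \<le> ennreal (v' x)" .
qed

lemma Bu_le: "(\<integral>\<^sup>+t. ennreal (u t) * indicator {x..} t \<partial>lborel) \<le> ennreal (- u' x)"
proof (rule nn_halfline_right)
  show "(\<lambda>t. ennreal (u t)) \<in> borel_measurable borel" using meas[OF adm P] by measurable
  fix b assume "x \<le> b"
  have "(\<integral>\<^sup>+t. ennreal (u t) * indicator {x..b} t \<partial>lborel) \<le> ennreal (u' b - u' x)"
    by (rule int_qz[OF adm P solu[OF adm P] _ cont(1)[OF adm P] \<open>x \<le> b\<close>]) (use pos[OF adm P] in auto)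
  also have "\<dots> \<le> ennreal (- u' x)" using pos(3)[OF adm P, of b] by (intro ennreal_leI) simp
  finally show "(\<integral>\<^sup>+t. ennreal (u t) * indicator {x..b} t \<partial>lborel) \<le> ennreal (- u' x)" .
qed

lemma green_nonneg: "0 \<le> green u v x t"
  using pos[OF adm P] by (auto simp: green_def less_imp_le)

lemma green_sym: "green u v x t = green u v t x"
  by (auto simp: green_def)

lemma green_le_diag: "green u v x t \<le> u x * v x"
proof (cases "t \<le> x")
  case True
  then show ?thesis using v_inc[OF adm P True] pos[OF adm P] by (simp add: green_def)
next
  case False
  then have "x \<le> t" by simp
  then show ?thesis using u_dec[OF adm P \<open>x \<le> t\<close>] pos[OF adm P] False by (simp add: green_def)
qed

lemma green_meas2: "(\<lambda>(x,t). green u v x t) \<in> borel_measurable (lborel \<Otimes>\<^sub>M lborel)"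
  using meas[OF adm P] unfolding green_def by measurable

lemma green_meas: "(\<lambda>t. green u v x t) \<in> borel_measurable borel"
  using meas[OF adm P] unfolding green_def by measurable

lemma green_nn_le: "(\<integral>\<^sup>+t. ennreal (green u v x t) \<partial>lborel)
   \<le> ennreal (u x) * ennreal (v' x) + ennreal (v x) * ennreal (- u' x)"
proof -
  have "(\<integral>\<^sup>+t. ennreal (green u v x t) \<partial>lborel) \<le>
     (\<integral>\<^sup>+t. ennreal (u x) * (ennreal (v t) * indicator {..x} t) + ennreal (v x) * (ennreal (u t) * indicator {x..} t) \<partial>lborel)"
  proof (rule nn_integral_mono)
    fix t
    show "ennreal (green u v x t) \<le> ennreal (u x) * (ennreal (v t) * indicator {..x} t) + ennreal (v x) * (ennreal (u t) * indicator {x..} t)"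
      using pos[OF adm P, of x] pos[OF adm P, of t]
      by (cases "t \<le> x") (auto simp: green_def indicator_def ennreal_mult[symmetric] intro: add_increasing add_increasing2)
  qed
  also have "\<dots> = ennreal (u x) * (\<integral>\<^sup>+t. ennreal (v t) * indicator {..x} t \<partial>lborel)
      + ennreal (v x) * (\<integral>\<^sup>+t. ennreal (u t) * indicator {x..} t \<partial>lborel)"
    using meas[OF adm P] by (simp add: nn_integral_add nn_integral_cmult)
  also have "\<dots> \<le> ennreal (u x) * ennreal (v' x) + ennreal (v x) * ennreal (- u' x)"
    by (intro add_mono mult_left_mono Av_le Bu_le) auto
  finally show ?thesis .
qed

lemma green_nn_fin: "(\<integral>\<^sup>+t. ennreal (green u v x t) \<partial>lborel) < \<infinity>"
proof -
  have "ennreal (u x) * ennreal (v' x) + ennreal (v x) * ennreal (- u' x) < \<infinity>"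
    by (simp add: ennreal_mult_less_top)
  then show ?thesis using green_nn_le[of x] by (rule le_less_trans[rotated])
qed

lemma green_int: "integrable lborel (\<lambda>t. green u v x t)"
  by (rule integrableI_nonneg) (use green_nn_fin green_nonneg green_meas in auto)

lemma green_nn_eq: "(\<integral>\<^sup>+t. ennreal (green u v x t) \<partial>lborel) = ennreal (\<integral>t. green u v x t \<partial>lborel)"
  by (rule nn_integral_eq_integral[OF green_int]) (simp add: green_nonneg)

end


context
  fixes q u u' v v' :: "real \<Rightarrow> real"
  assumes adm: "admissible_q q" and P: "PFSS q u u' v v'"
begin

lemmas measD[measurable] = meas[OF adm P]

lemma shift_nn:
  fixes F :: "real \<Rightarrow> ennreal"
  assumes [measurable]: "F \<in> borel_measurable borel"
  shows "(\<integral>\<^sup>+x. F (x + c) \<partial>lborel) = (\<integral>\<^sup>+x. F x \<partial>lborel)"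
  using nn_integral_real_affine[of F 1 c] by (simp add: add.commute)

lemma tele_u:
  assumes "0 < \<eta>"
  shows "(\<integral>\<^sup>+x. ennreal (u x - u (x + \<eta>)) * indicator {s..} x \<partial>lborel) \<le> ennreal (\<eta> * u s)"
proof -
  note m = meas[OF adm P]
  define X where "X = (\<integral>\<^sup>+x. ennreal (u x - u (x + \<eta>)) * indicator {s..} x \<partial>lborel)"
  define Y where "Y = (\<integral>\<^sup>+x. ennreal (u x) * indicator {s+\<eta>..} x \<partial>lborel)"
  define Z where "Z = (\<integral>\<^sup>+x. ennreal (u x) * indicator {s..<s+\<eta>} x \<partial>lborel)"
  define I where "I = (\<integral>\<^sup>+x. ennreal (u x) * indicator {s..} x \<partial>lborel)"
  have Yfin: "Y < \<infinity>"
    using Bu_le[OF adm P, of "s+\<eta>"] unfolding Y_def by (rule le_less_trans) simp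
  have sh: "(\<integral>\<^sup>+x. ennreal (u (x + \<eta>)) * indicator {s..} x \<partial>lborel) = Y"
  proof -
    have "(\<integral>\<^sup>+x. ennreal (u (x + \<eta>)) * indicator {s..} x \<partial>lborel)
        = (\<integral>\<^sup>+x. (\<lambda>y. ennreal (u y) * indicator {s+\<eta>..} y) (x + \<eta>) \<partial>lborel)"
      by (intro nn_integral_cong) (auto simp: indicator_def)
    also have "\<dots> = Y" unfolding Y_def by (rule shift_nn) measurable
    finally show ?thesis .
  qed
  have "I = X + (\<integral>\<^sup>+x. ennreal (u (x + \<eta>)) * indicator {s..} x \<partial>lborel)"
  proof -
    have "I = (\<integral>\<^sup>+x. ennreal (u x - u (x + \<eta>)) * indicator {s..} x + ennreal (u (x + \<eta>)) * indicator {s..} x \<partial>lborel)"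
      unfolding I_def
    proof (intro nn_integral_cong)
      fix x
      have "u (x + \<eta>) \<le> u x" using u_dec[OF adm P, of x "x+\<eta>"] assms by simp
      then show "ennreal (u x) * indicator {s..} x = ennreal (u x - u (x + \<eta>)) * indicator {s..} x + ennreal (u (x + \<eta>)) * indicator {s..} x"
        using pos[OF adm P, of "x+\<eta>"] by (auto simp: indicator_def ennreal_plus[symmetric] simp del: ennreal_plus)
    qed
    also have "\<dots> = X + (\<integral>\<^sup>+x. ennreal (u (x + \<eta>)) * indicator {s..} x \<partial>lborel)"
      unfolding X_def by (rule nn_integral_add; measurable)
    finally show ?thesis .
  qed
  then have e1: "I = X + Y" using sh by simp
  have "I = (\<integral>\<^sup>+x. ennreal (u x) * indicator {s..<s+\<eta>} x + ennreal (u x) * indicator {s+\<eta>..} x \<partial>lborel)"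
    unfolding I_def using assms by (intro nn_integral_cong) (auto simp: indicator_def)
  also have "\<dots> = Z + Y" unfolding Z_def Y_def by (rule nn_integral_add; measurable)
  finally have "X + Y = Z + Y" using e1 by simp
  then have YXZ: "Y + X = Y + Z" by (simp add: add.commute)
  have "Y \<noteq> \<infinity>" using Yfin by auto
  then have XZ: "X = Z" using ennreal_add_left_cancel[of Y X Z] YXZ by blast
  have "Z \<le> (\<integral>\<^sup>+x. ennreal (u s) * indicator {s..<s+\<eta>} x \<partial>lborel)"
    unfolding Z_def
  proof (intro nn_integral_mono)
    fix x show "ennreal (u x) * indicator {s..<s + \<eta>} x \<le> ennreal (u s) * indicator {s..<s + \<eta>} x"
      using u_dec[OF adm P, of s x] by (auto simp: indicator_def intro: ennreal_leI)
  qed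
  also have "\<dots> = ennreal (u s) * ennreal \<eta>"
    by (subst nn_integral_cmult_indicator) (use assms in auto)
  also have "\<dots> = ennreal (\<eta> * u s)"
    using assms pos[OF adm P, of s] by (simp add: ennreal_mult[symmetric] mult.commute)
  finally show ?thesis using XZ X_def by simp
qed

lemma tele_v:
  assumes "0 < \<eta>"
  shows "(\<integral>\<^sup>+x. ennreal (v (x + \<eta>) - v x) * indicator {..s} x \<partial>lborel) \<le> ennreal (\<eta> * v (s + \<eta>))"
proof -
  note m = meas[OF adm P]
  define X where "X = (\<integral>\<^sup>+x. ennreal (v (x + \<eta>) - v x) * indicator {..s} x \<partial>lborel)"
  define A where "A = (\<integral>\<^sup>+x. ennreal (v x) * indicator {..s} x \<partial>lborel)"
  define Z where "Z = (\<integral>\<^sup>+x. ennreal (v x) * indicator {s<..s+\<eta>} x \<partial>lborel)"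
  define W where "W = (\<integral>\<^sup>+x. ennreal (v x) * indicator {..s+\<eta>} x \<partial>lborel)"
  have Afin: "A < \<infinity>"
    using Av_le[OF adm P, of "s"] unfolding A_def by (rule le_less_trans) simp
  have sh: "(\<integral>\<^sup>+x. ennreal (v (x + \<eta>)) * indicator {..s} x \<partial>lborel) = W"
  proof -
    have "(\<integral>\<^sup>+x. ennreal (v (x + \<eta>)) * indicator {..s} x \<partial>lborel)
        = (\<integral>\<^sup>+x. (\<lambda>y. ennreal (v y) * indicator {..s+\<eta>} y) (x + \<eta>) \<partial>lborel)"
      by (intro nn_integral_cong) (auto simp: indicator_def)
    also have "\<dots> = W" unfolding W_def by (rule shift_nn) measurable
    finally show ?thesis .
  qed
  have "W = X + A"
  proof -
    have "(\<integral>\<^sup>+x. ennreal (v (x + \<eta>)) * indicator {..s} x \<partial>lborel) = (\<integral>\<^sup>+x. ennreal (v (x + \<eta>) - v x) * indicator {..s} x + ennreal (v x) * indicator {..s} x \<partial>lborel)"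
    proof (intro nn_integral_cong)
      fix x
      have "v x \<le> v (x + \<eta>)" using v_inc[OF adm P, of x "x+\<eta>"] assms by simp
      then show "ennreal (v (x + \<eta>)) * indicator {..s} x = ennreal (v (x + \<eta>) - v x) * indicator {..s} x + ennreal (v x) * indicator {..s} x"
        using pos[OF adm P, of "x"] by (auto simp: indicator_def ennreal_plus[symmetric] simp del: ennreal_plus)
    qed
    also have "\<dots> = X + A"
      unfolding X_def A_def by (rule nn_integral_add; measurable)
    finally show ?thesis using sh by simp
  qed
  moreover have "W = A + Z"
  proof -
    have "W = (\<integral>\<^sup>+x. ennreal (v x) * indicator {..s} x + ennreal (v x) * indicator {s<..s+\<eta>} x \<partial>lborel)"
      unfolding W_def using assms by (intro nn_integral_cong) (auto simp: indicator_def)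
    also have "\<dots> = A + Z" unfolding Z_def A_def by (rule nn_integral_add; measurable)
    finally show ?thesis .
  qed
  ultimately have AXZ: "A + X = A + Z" by (metis add.commute)
  have "A \<noteq> \<infinity>" using Afin by auto
  then have XZ: "X = Z" using ennreal_add_left_cancel[of A X Z] AXZ by blast
  have "Z \<le> (\<integral>\<^sup>+x. ennreal (v (s+\<eta>)) * indicator {s<..s+\<eta>} x \<partial>lborel)"
    unfolding Z_def
  proof (intro nn_integral_mono)
    fix x show "ennreal (v x) * indicator {s<..s + \<eta>} x \<le> ennreal (v (s+\<eta>)) * indicator {s<..s + \<eta>} x"
      using v_inc[OF adm P, of x "s+\<eta>"] by (auto simp: indicator_def intro: ennreal_leI)
  qed
  also have "\<dots> = ennreal (v (s+\<eta>)) * ennreal \<eta>"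
    by (subst nn_integral_cmult_indicator) (use assms in auto)
  also have "\<dots> = ennreal (\<eta> * v (s+\<eta>))"
    using assms pos[OF adm P, of "s+\<eta>"] by (simp add: ennreal_mult[symmetric] mult.commute)
  finally show ?thesis using XZ X_def by simp
qed

end

declare measD[measurable del]



lemma nn3:
  fixes k f1 f2 f3 :: "real \<Rightarrow> real"
  assumes [measurable]: "f1 \<in> borel_measurable borel" "f2 \<in> borel_measurable borel" "f3 \<in> borel_measurable borel"
    and nn: "\<And>t. 0 \<le> f1 t" "\<And>t. 0 \<le> f2 t" "\<And>t. 0 \<le> f3 t" "0 \<le> c1" "0 \<le> c2" "0 \<le> c3"
    and le: "\<And>t. \<bar>k t\<bar> \<le> c1 * f1 t + c2 * f2 t + c3 * f3 t"
    and i1: "(\<integral>\<^sup>+t. ennreal (f1 t) \<partial>lborel) \<le> ennreal B1"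
    and i2: "(\<integral>\<^sup>+t. ennreal (f2 t) \<partial>lborel) \<le> ennreal B2"
    and i3: "(\<integral>\<^sup>+t. ennreal (f3 t) \<partial>lborel) \<le> ennreal B3"
    and B: "0 \<le> B1" "0 \<le> B2" "0 \<le> B3"
  shows "(\<integral>\<^sup>+t. ennreal \<bar>k t\<bar> \<partial>lborel) \<le> ennreal (c1 * B1 + c2 * B2 + c3 * B3)"
proof -
  have "(\<integral>\<^sup>+t. ennreal \<bar>k t\<bar> \<partial>lborel) \<le>
      (\<integral>\<^sup>+t. ennreal c1 * ennreal (f1 t) + ennreal c2 * ennreal (f2 t) + ennreal c3 * ennreal (f3 t) \<partial>lborel)"
  proof (rule nn_integral_mono)
    fix t
    have "ennreal \<bar>k t\<bar> \<le> ennreal (c1 * f1 t + c2 * f2 t + c3 * f3 t)" using le[of t] by (rule ennreal_leI)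
    also have "\<dots> = ennreal c1 * ennreal (f1 t) + ennreal c2 * ennreal (f2 t) + ennreal c3 * ennreal (f3 t)"
      using nn(1)[of t] nn(2)[of t] nn(3)[of t] nn(4-6) by (simp add: ennreal_plus[symmetric] ennreal_mult[symmetric] del: ennreal_plus)
    finally show "ennreal \<bar>k t\<bar> \<le> ennreal c1 * ennreal (f1 t) + ennreal c2 * ennreal (f2 t) + ennreal c3 * ennreal (f3 t)" .
  qed
  also have "\<dots> = ennreal c1 * (\<integral>\<^sup>+t. ennreal (f1 t) \<partial>lborel) + ennreal c2 * (\<integral>\<^sup>+t. ennreal (f2 t) \<partial>lborel)
        + ennreal c3 * (\<integral>\<^sup>+t. ennreal (f3 t) \<partial>lborel)"
    by (simp add: nn_integral_add nn_integral_cmult)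
  also have "\<dots> \<le> ennreal c1 * ennreal B1 + ennreal c2 * ennreal B2 + ennreal c3 * ennreal B3"
    by (intro add_mono mult_left_mono i1 i2 i3) auto
  also have "\<dots> = ennreal (c1 * B1 + c2 * B2 + c3 * B3)"
    using nn B by (simp add: ennreal_plus[symmetric] ennreal_mult[symmetric] del: ennreal_plus)
  finally show ?thesis .
qed

lemma ennreal_ind: "ennreal (f * indicator S t) = ennreal f * indicator S t"
  by (simp add: indicator_def)

context
  fixes q u u' v v' :: "real \<Rightarrow> real"
  assumes adm: "admissible_q q" and P: "PFSS q u u' v v'"
begin

lemmas measE[measurable] = meas[OF adm P]

lemma green_meas1[measurable]: "(\<lambda>x. green u v x t) \<in> borel_measurable borel"
  unfolding green_def by measurable

lemma green_meas0[measurable]: "(\<lambda>t. green u v x t) \<in> borel_measurable borel"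
  unfolding green_def by measurable

lemma row_far:
  "(\<integral>\<^sup>+t. ennreal \<bar>green u v (x+\<eta>) t - green u v x t\<bar> \<partial>lborel)
    \<le> ennreal (\<integral>t. green u v (x+\<eta>) t \<partial>lborel) + ennreal (\<integral>t. green u v x t \<partial>lborel)"
proof -
  have "(\<integral>\<^sup>+t. ennreal \<bar>green u v (x+\<eta>) t - green u v x t\<bar> \<partial>lborel)
      \<le> (\<integral>\<^sup>+t. ennreal (green u v (x+\<eta>) t) + ennreal (green u v x t) \<partial>lborel)"
  proof (rule nn_integral_mono)
    fix t
    have a: "0 \<le> green u v (x+\<eta>) t" "0 \<le> green u v x t" using green_nonneg[OF adm P] by auto
    then have "\<bar>green u v (x+\<eta>) t - green u v x t\<bar> \<le> green u v (x+\<eta>) t + green u v x t" by simp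
    then show "ennreal \<bar>green u v (x+\<eta>) t - green u v x t\<bar> \<le> ennreal (green u v (x+\<eta>) t) + ennreal (green u v x t)"
      using a by (simp add: ennreal_plus[symmetric] ennreal_leI del: ennreal_plus)
  qed
  also have "\<dots> = ennreal (\<integral>t. green u v (x+\<eta>) t \<partial>lborel) + ennreal (\<integral>t. green u v x t \<partial>lborel)"
    by (simp add: nn_integral_add green_nn_eq[OF adm P])
  finally show ?thesis .
qed

lemma col_far:
  "(\<integral>\<^sup>+x. ennreal \<bar>green u v (x+\<eta>) t - green u v x t\<bar> \<partial>lborel)
    \<le> ennreal (\<integral>x. green u v t x \<partial>lborel) + ennreal (\<integral>x. green u v t x \<partial>lborel)"
proof -
  have "(\<integral>\<^sup>+x. ennreal \<bar>green u v (x+\<eta>) t - green u v x t\<bar> \<partial>lborel)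
      \<le> (\<integral>\<^sup>+x. ennreal (green u v (x+\<eta>) t) + ennreal (green u v x t) \<partial>lborel)"
  proof (rule nn_integral_mono)
    fix x
    have a: "0 \<le> green u v (x+\<eta>) t" "0 \<le> green u v x t" using green_nonneg[OF adm P] by auto
    then have "\<bar>green u v (x+\<eta>) t - green u v x t\<bar> \<le> green u v (x+\<eta>) t + green u v x t" by simp
    then show "ennreal \<bar>green u v (x+\<eta>) t - green u v x t\<bar> \<le> ennreal (green u v (x+\<eta>) t) + ennreal (green u v x t)"
      using a by (simp add: ennreal_plus[symmetric] ennreal_leI del: ennreal_plus)
  qed
  also have "\<dots> = (\<integral>\<^sup>+x. ennreal (green u v (x+\<eta>) t) \<partial>lborel) + (\<integral>\<^sup>+x. ennreal (green u v x t) \<partial>lborel)"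
    by (simp add: nn_integral_add)
  also have "(\<integral>\<^sup>+x. ennreal (green u v (x+\<eta>) t) \<partial>lborel) = (\<integral>\<^sup>+x. ennreal (green u v x t) \<partial>lborel)"
    by (rule shift_nn[OF adm P, of "\<lambda>x. ennreal (green u v x t)"]) measurable
  also have "(\<integral>\<^sup>+x. ennreal (green u v x t) \<partial>lborel) = ennreal (\<integral>x. green u v t x \<partial>lborel)"
    using green_nn_eq[OF adm P, of t] green_sym[OF adm P, of _ t] by simp
  finally show ?thesis .
qed

end

declare measE[measurable del] green_meas1[measurable del] green_meas0[measurable del]



context
  fixes q u u' v v' :: "real \<Rightarrow> real"
  assumes adm: "admissible_q q" and P: "PFSS q u u' v v'"
begin

lemmas measF[measurable] = meas[OF adm P]
lemmas gmF[measurable] = green_meas1[OF adm P] green_meas0[OF adm P]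

lemma row_pt:
  assumes "0 < \<eta>" "r0 \<le> x" "x \<le> r1"
  shows "\<bar>green u v (x+\<eta>) t - green u v x t\<bar> \<le> (u x - u (x+\<eta>)) * (v t * indicator {..r1} t)
     + (v (x+\<eta>) - v x) * (u t * indicator {r0..} t) + (u x * v (x+\<eta>)) * indicator {x..x+\<eta>} t"
proof -
  have ud: "u (x+\<eta>) \<le> u x" and vi: "v x \<le> v (x+\<eta>)"
    using u_dec[OF adm P] v_inc[OF adm P] assms by auto
  have pt: "0 < u t" "0 < v t" "0 < u x" "0 < v x" "0 < u (x+\<eta>)" "0 < v (x+\<eta>)"
    using pos[OF adm P] by auto
  have n1: "0 \<le> (u x - u (x+\<eta>)) * (v t * indicator {..r1} t)"
    using ud pt by (auto simp: indicator_def)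
  have n2: "0 \<le> (v (x+\<eta>) - v x) * (u t * indicator {r0..} t)"
    using vi pt by (auto simp: indicator_def)
  have n3: "0 \<le> (u x * v (x+\<eta>)) * indicator {x..x+\<eta>} t"
    using pt by (auto simp: indicator_def)
  consider "t \<le> x" | "x < t" "x + \<eta> \<le> t" | "x < t" "t < x + \<eta>" by linarith
  then show ?thesis
  proof cases
    case 1
    then have "green u v (x+\<eta>) t = u (x+\<eta>) * v t" "green u v x t = u x * v t"
      using assms by (auto simp: green_def)
    moreover have "\<bar>u (x+\<eta>) * v t - u x * v t\<bar> = (u x - u (x+\<eta>)) * v t"
      using ud pt by (simp add: abs_if left_diff_distrib mult_right_mono)
    moreover have "indicator {..r1} t = (1::real)" using 1 assms by simp
    ultimately show ?thesis using n2 n3 by simp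
  next
    case 2
    then have "green u v (x+\<eta>) t = u t * v (x+\<eta>)" "green u v x t = u t * v x"
      by (auto simp: green_def)
    moreover have "\<bar>u t * v (x+\<eta>) - u t * v x\<bar> = (v (x+\<eta>) - v x) * u t"
      using vi pt by (simp add: abs_if right_diff_distrib mult_left_mono mult.commute)
    moreover have "indicator {r0..} t = (1::real)" using 2 assms by simp
    ultimately show ?thesis using n1 n3 by (simp add: mult.commute)
  next
    case 3
    then have e: "green u v (x+\<eta>) t = u (x+\<eta>) * v t" "green u v x t = u t * v x"
      by (auto simp: green_def)
    have "v t \<le> v (x+\<eta>)" "u t \<le> u x" using 3 v_inc[OF adm P] u_dec[OF adm P] by auto
    then have b1: "u (x+\<eta>) * v t \<le> u x * v (x+\<eta>)" "u t * v x \<le> u x * v (x+\<eta>)"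
      using ud vi pt by (auto intro!: mult_mono)
    have "0 \<le> u (x+\<eta>) * v t" "0 \<le> u t * v x" using pt by auto
    then have "\<bar>green u v (x+\<eta>) t - green u v x t\<bar> \<le> u x * v (x+\<eta>)" using e b1 by linarith
    moreover have "indicator {x..x+\<eta>} t = (1::real)" using 3 by simp
    ultimately show ?thesis using n1 n2 by simp
  qed
qed

lemma col_pt:
  assumes "0 < \<eta>"
  shows "\<bar>green u v (x+\<eta>) t - green u v x t\<bar> \<le> v t * ((u x - u (x+\<eta>)) * indicator {t..} x)
     + u t * ((v (x+\<eta>) - v x) * indicator {..t} x) + (u t * v t) * indicator {t-\<eta>..t} x"
proof -
  have ud: "u (x+\<eta>) \<le> u x" and vi: "v x \<le> v (x+\<eta>)"
    using u_dec[OF adm P] v_inc[OF adm P] assms by auto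
  have pt: "0 < u t" "0 < v t" "0 < u x" "0 < v x" "0 < u (x+\<eta>)" "0 < v (x+\<eta>)"
    using pos[OF adm P] by auto
  have n1: "0 \<le> v t * ((u x - u (x+\<eta>)) * indicator {t..} x)"
    using ud pt by (auto simp: indicator_def)
  have n2: "0 \<le> u t * ((v (x+\<eta>) - v x) * indicator {..t} x)"
    using vi pt by (auto simp: indicator_def)
  have n3: "0 \<le> (u t * v t) * indicator {t-\<eta>..t} x"
    using pt by (auto simp: indicator_def)
  consider "t \<le> x" | "x < t" "x + \<eta> \<le> t" | "x < t" "t < x + \<eta>" by linarith
  then show ?thesis
  proof cases
    case 1
    then have "green u v (x+\<eta>) t = u (x+\<eta>) * v t" "green u v x t = u x * v t"
      using assms by (auto simp: green_def)
    moreover have "\<bar>u (x+\<eta>) * v t - u x * v t\<bar> = v t * (u x - u (x+\<eta>))"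
      using mult_right_mono[OF ud, of "v t"] pt by (simp add: abs_if algebra_simps)
    moreover have "indicator {t..} x = (1::real)" using 1 by simp
    ultimately show ?thesis using n2 n3 by simp
  next
    case 2
    then have "green u v (x+\<eta>) t = u t * v (x+\<eta>)" "green u v x t = u t * v x"
      by (auto simp: green_def)
    moreover have "\<bar>u t * v (x+\<eta>) - u t * v x\<bar> = u t * (v (x+\<eta>) - v x)"
      using vi pt by (simp add: abs_if right_diff_distrib mult_left_mono)
    moreover have "indicator {..t} x = (1::real)" using 2 by simp
    ultimately show ?thesis using n1 n3 by simp
  next
    case 3
    then have e: "green u v (x+\<eta>) t = u (x+\<eta>) * v t" "green u v x t = u t * v x"
      by (auto simp: green_def)
    have "u (x+\<eta>) \<le> u t" "v x \<le> v t" using 3 v_inc[OF adm P] u_dec[OF adm P] by auto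
    then have b1: "u (x+\<eta>) * v t \<le> u t * v t" "u t * v x \<le> u t * v t"
      using pt by (auto intro!: mult_mono)
    have "0 \<le> u (x+\<eta>) * v t" "0 \<le> u t * v x" using pt by auto
    then have "\<bar>green u v (x+\<eta>) t - green u v x t\<bar> \<le> u t * v t" using e b1 by linarith
    moreover have "indicator {t-\<eta>..t} x = (1::real)" using 3 by simp
    ultimately show ?thesis using n1 n2 by simp
  qed
qed

lemma row_near:
  assumes "0 < \<eta>" "r0 \<le> x" "x \<le> r1"
  shows "(\<integral>\<^sup>+t. ennreal \<bar>green u v (x+\<eta>) t - green u v x t\<bar> \<partial>lborel)
    \<le> ennreal ((u x - u (x+\<eta>)) * v' r1 + (v (x+\<eta>) - v x) * (- u' r0) + (u x * v (x+\<eta>)) * \<eta>)"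
proof (rule nn3)
  show "\<And>t. \<bar>green u v (x+\<eta>) t - green u v x t\<bar> \<le> (u x - u (x+\<eta>)) * (v t * indicator {..r1} t)
     + (v (x+\<eta>) - v x) * (u t * indicator {r0..} t) + (u x * v (x+\<eta>)) * indicator {x..x+\<eta>} t"
    by (rule row_pt[OF assms])
  show "(\<integral>\<^sup>+t. ennreal (v t * indicator {..r1} t) \<partial>lborel) \<le> ennreal (v' r1)"
    using Av_le[OF adm P, of r1] by (simp add: ennreal_ind)
  show "(\<integral>\<^sup>+t. ennreal (u t * indicator {r0..} t) \<partial>lborel) \<le> ennreal (- u' r0)"
    using Bu_le[OF adm P, of r0] by (simp add: ennreal_ind)
  show "(\<integral>\<^sup>+t. ennreal (indicator {x..x+\<eta>} t) \<partial>lborel) \<le> ennreal \<eta>"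
    using assms by (simp add: ennreal_indicator nn_integral_indicator)
  show "0 \<le> u x - u (x+\<eta>)" "0 \<le> v (x+\<eta>) - v x"
    using u_dec[OF adm P] v_inc[OF adm P] assms by auto
  show "0 \<le> u x * v (x+\<eta>)" "0 \<le> v' r1" "0 \<le> - u' r0" "0 \<le> \<eta>"
    using pos[OF adm P] assms by (auto intro: less_imp_le)
  show "\<And>t. 0 \<le> v t * indicator {..r1} t" "\<And>t. 0 \<le> u t * indicator {r0..} t"
    "\<And>t. 0 \<le> (indicator {x..x+\<eta>} t :: real)"
    using pos[OF adm P] by (auto simp: indicator_def less_imp_le)
qed measurable

lemma col_near:
  assumes "0 < \<eta>"
  shows "(\<integral>\<^sup>+x. ennreal \<bar>green u v (x+\<eta>) t - green u v x t\<bar> \<partial>lborel)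
    \<le> ennreal (v t * (\<eta> * u t) + u t * (\<eta> * v (t+\<eta>)) + (u t * v t) * \<eta>)"
proof (rule nn3)
  show "\<And>x. \<bar>green u v (x+\<eta>) t - green u v x t\<bar> \<le> v t * ((u x - u (x+\<eta>)) * indicator {t..} x)
     + u t * ((v (x+\<eta>) - v x) * indicator {..t} x) + (u t * v t) * indicator {t-\<eta>..t} x"
    by (rule col_pt[OF assms])
  show "(\<integral>\<^sup>+x. ennreal ((u x - u (x+\<eta>)) * indicator {t..} x) \<partial>lborel) \<le> ennreal (\<eta> * u t)"
    using tele_u[OF adm P assms, of t] by (simp add: ennreal_ind)
  show "(\<integral>\<^sup>+x. ennreal ((v (x+\<eta>) - v x) * indicator {..t} x) \<partial>lborel) \<le> ennreal (\<eta> * v (t+\<eta>))"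
    using tele_v[OF adm P assms, of t] by (simp add: ennreal_ind)
  show "(\<integral>\<^sup>+x. ennreal (indicator {t-\<eta>..t} x) \<partial>lborel) \<le> ennreal \<eta>"
    using assms by (simp add: ennreal_indicator nn_integral_indicator)
  show "\<And>x. 0 \<le> (u x - u (x+\<eta>)) * indicator {t..} x" "\<And>x. 0 \<le> (v (x+\<eta>) - v x) * indicator {..t} x"
    using u_dec[OF adm P] v_inc[OF adm P] assms by (auto simp: indicator_def)
  show "\<And>x. 0 \<le> (indicator {t-\<eta>..t} x :: real)" by (auto simp: indicator_def)
  show "0 \<le> v t" "0 \<le> u t" "0 \<le> u t * v t" "0 \<le> \<eta> * u t" "0 \<le> \<eta> * v (t+\<eta>)" "0 \<le> \<eta>"
    using pos[OF adm P, of t] pos[OF adm P, of "t+\<eta>"] assms by auto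
qed measurable

end

declare measF[measurable del] gmF[measurable del]



context
  fixes q u u' v v' :: "real \<Rightarrow> real"
  assumes adm: "admissible_q q" and P: "PFSS q u u' v v'"
begin

lemma ennreal_sum_le: "a < e/4 \<Longrightarrow> b < e/4 \<Longrightarrow> 0 < e \<Longrightarrow> ennreal a + ennreal b \<le> ennreal e"
proof -
  assume "a < e/4" "b < e/4" "0 < e"
  then have "ennreal a + ennreal b \<le> ennreal (e/4) + ennreal (e/4)"
    by (intro add_mono ennreal_leI) auto
  also have "\<dots> = ennreal (e/2)" using \<open>0 < e\<close> by (simp add: ennreal_plus[symmetric] del: ennreal_plus)
  also have "\<dots> \<le> ennreal e" using \<open>0 < e\<close> by (intro ennreal_leI) auto
  finally show ?thesis .
qed

lemma kernel_small:
  assumes hyp: "((\<lambda>x. \<integral>t. green u v x t \<partial>lborel) \<longlongrightarrow> 0) at_infinity" and e: "0 < \<epsilon>"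
  shows "\<exists>\<delta>>0. \<forall>\<eta>. 0 < \<eta> \<and> \<eta> < \<delta> \<longrightarrow>
     (\<forall>x. (\<integral>\<^sup>+t. ennreal \<bar>green u v (x+\<eta>) t - green u v x t\<bar> \<partial>lborel) \<le> ennreal \<epsilon>) \<and>
     (\<forall>t. (\<integral>\<^sup>+x. ennreal \<bar>green u v (x+\<eta>) t - green u v x t\<bar> \<partial>lborel) \<le> ennreal \<epsilon>)"
proof -
  define g where "g x = (\<integral>t. green u v x t \<partial>lborel)" for x
  have "\<forall>\<^sub>F x in at_infinity. dist (g x) 0 < \<epsilon>/4"
  proof -
    have "\<epsilon>/4 > 0" using e by simp
    then show ?thesis using hyp unfolding g_def tendsto_iff by blast
  qed
  then obtain b where b: "\<And>x. b \<le> norm x \<Longrightarrow> dist (g x) 0 < \<epsilon>/4"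
    unfolding eventually_at_infinity by blast
  define R where "R = \<bar>b\<bar> + 1"
  have R: "0 < R" "b \<le> R" unfolding R_def by auto
  have gs: "g x < \<epsilon>/4" if "R \<le> \<bar>x\<bar>" for x
    using b[of x] that R by auto
  define S where "S = {-R-1..R+1}"
  have ucu: "uniformly_continuous_on S u" and ucv: "uniformly_continuous_on S v"
    unfolding S_def using cont[OF adm P]
    by (auto intro!: compact_uniformly_continuous intro: continuous_on_subset)
  define cU where "cU = v' R + 1"
  define cV where "cV = - u' (-R-1) + 1"
  define M where "M = u (-R-1) * v (R+1)"
  have cpos: "0 < cU" "0 < cV" "0 < M"
    unfolding cU_def cV_def M_def using pos[OF adm P, of R] pos[OF adm P, of "-R-1"] pos[OF adm P, of "R+1"] by auto
  obtain du where du: "0 < du" "\<And>x x'. x \<in> S \<Longrightarrow> x' \<in> S \<Longrightarrow> dist x' x < du \<Longrightarrow> dist (u x') (u x) < \<epsilon>/(3*cU)"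
    using ucu e cpos unfolding uniformly_continuous_on_def by (metis divide_pos_pos mult_pos_pos zero_less_numeral)
  obtain dv where dv: "0 < dv" "\<And>x x'. x \<in> S \<Longrightarrow> x' \<in> S \<Longrightarrow> dist x' x < dv \<Longrightarrow> dist (v x') (v x) < \<epsilon>/(3*cV)"
    using ucv e cpos unfolding uniformly_continuous_on_def by (metis divide_pos_pos mult_pos_pos zero_less_numeral)
  define \<delta> where "\<delta> = min 1 (min du (min dv (\<epsilon>/(3*(M+1)))))"
  have dpos: "0 < \<delta>" unfolding \<delta>_def using du dv e cpos by auto
  show ?thesis
  proof (rule exI[of _ \<delta>], rule conjI[OF dpos], rule allI, rule impI)
    fix \<eta> assume h: "0 < \<eta> \<and> \<eta> < \<delta>"
    then have h0: "0 < \<eta>" and h1: "\<eta> < 1" and hu: "\<eta> < du" and hv: "\<eta> < dv" and hM: "\<eta> < \<epsilon>/(3*(M+1))"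
      unfolding \<delta>_def by auto
    have M3: "3 * \<eta> * M \<le> \<epsilon>"
    proof -
      have "\<eta> * (3*(M+1)) < \<epsilon>" using hM cpos by (simp add: field_simps)
      moreover have "3*\<eta>*M \<le> \<eta>*(3*(M+1))" using h0 by (simp add: algebra_simps)
      ultimately show ?thesis by linarith
    qed
    have rowb: "\<forall>x. (\<integral>\<^sup>+t. ennreal \<bar>green u v (x+\<eta>) t - green u v x t\<bar> \<partial>lborel) \<le> ennreal \<epsilon>"
    proof
      fix x
      show "(\<integral>\<^sup>+t. ennreal \<bar>green u v (x+\<eta>) t - green u v x t\<bar> \<partial>lborel) \<le> ennreal \<epsilon>"
      proof (cases "R \<le> x \<or> x \<le> -R-1")
        case True
        then have "R \<le> \<bar>x\<bar>" "R \<le> \<bar>x+\<eta>\<bar>" using h0 h1 R by auto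
        then have "g (x+\<eta>) < \<epsilon>/4" "g x < \<epsilon>/4" using gs by auto
        then show ?thesis using row_far[OF adm P, of x \<eta>] ennreal_sum_le[OF _ _ e] unfolding g_def
          by (meson order_trans)
      next
        case False
        then have xr: "-R-1 \<le> x" "x \<le> R" by auto
        have inS: "x \<in> S" "x + \<eta> \<in> S" unfolding S_def using xr h0 h1 by auto
        have ud: "u (x+\<eta>) \<le> u x" and vi: "v x \<le> v (x+\<eta>)"
          using u_dec[OF adm P] v_inc[OF adm P] h0 by auto
        have t1: "(u x - u (x+\<eta>)) * v' R \<le> \<epsilon>/3"
        proof -
          have "u x - u (x+\<eta>) \<le> \<epsilon>/(3*cU)" using du(2)[OF inS] hu ud h0 by (auto simp: dist_real_def)
          moreover have "v' R \<le> cU" "0 \<le> v' R" unfolding cU_def using pos[OF adm P, of R] by auto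
          ultimately have "(u x - u (x+\<eta>)) * v' R \<le> \<epsilon>/(3*cU) * cU"
            using ud e cpos by (intro mult_mono) auto
          then show ?thesis using cpos by simp
        qed
        have t2: "(v (x+\<eta>) - v x) * (- u' (-R-1)) \<le> \<epsilon>/3"
        proof -
          have "v (x+\<eta>) - v x \<le> \<epsilon>/(3*cV)" using dv(2)[OF inS] hv vi h0 by (auto simp: dist_real_def)
          moreover have "- u' (-R-1) \<le> cV" "0 \<le> - u' (-R-1)" unfolding cV_def using pos[OF adm P, of "-R-1"] by auto
          ultimately have "(v (x+\<eta>) - v x) * (- u' (-R-1)) \<le> \<epsilon>/(3*cV) * cV"
            using vi e cpos by (intro mult_mono) auto
          then show ?thesis using cpos by simp
        qed
        have t3: "(u x * v (x+\<eta>)) * \<eta> \<le> \<epsilon>/3"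
        proof -
          have "u x \<le> u (-R-1)" "v (x+\<eta>) \<le> v (R+1)"
            using u_dec[OF adm P] v_inc[OF adm P] xr h1 by auto
          then have "u x * v (x+\<eta>) \<le> M" unfolding M_def using pos[OF adm P]
            by (intro mult_mono) (auto intro: less_imp_le)
          then have "(u x * v (x+\<eta>)) * \<eta> \<le> M * \<eta>" using h0 by (intro mult_right_mono) auto
          then show ?thesis using M3 by (simp add: algebra_simps)
        qed
        have "(\<integral>\<^sup>+t. ennreal \<bar>green u v (x+\<eta>) t - green u v x t\<bar> \<partial>lborel)
           \<le> ennreal ((u x - u (x+\<eta>)) * v' R + (v (x+\<eta>) - v x) * (- u' (-R-1)) + (u x * v (x+\<eta>)) * \<eta>)"
          by (rule row_near[OF adm P h0 xr])
        also have "\<dots> \<le> ennreal \<epsilon>" using t1 t2 t3 by (intro ennreal_leI) simp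
        finally show ?thesis .
      qed
    qed
    have colb: "\<forall>t. (\<integral>\<^sup>+x. ennreal \<bar>green u v (x+\<eta>) t - green u v x t\<bar> \<partial>lborel) \<le> ennreal \<epsilon>"
    proof
      fix t
      show "(\<integral>\<^sup>+x. ennreal \<bar>green u v (x+\<eta>) t - green u v x t\<bar> \<partial>lborel) \<le> ennreal \<epsilon>"
      proof (cases "R \<le> \<bar>t\<bar>")
        case True
        then have "g t < \<epsilon>/4" using gs by auto
        then show ?thesis using col_far[OF adm P, of \<eta> t] ennreal_sum_le[OF _ _ e] unfolding g_def
          by (meson order_trans)
      next
        case False
        then have tr: "-R \<le> t" "t \<le> R" by auto
        have b1: "u t \<le> u (-R-1)" "v t \<le> v (R+1)" "v (t+\<eta>) \<le> v (R+1)"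
          using u_dec[OF adm P] v_inc[OF adm P] tr h1 by auto
        have p: "0 < u t" "0 < v t" "0 < v (t+\<eta>)" "0 < u (-R-1)" "0 < v (R+1)" using pos[OF adm P] by auto
        have m1: "u t * v t \<le> M" unfolding M_def using b1 p by (intro mult_mono) auto
        have m2: "u t * v (t+\<eta>) \<le> M" unfolding M_def using b1 p by (intro mult_mono) auto
        have "v t * (\<eta> * u t) + u t * (\<eta> * v (t+\<eta>)) + (u t * v t) * \<eta>
            = \<eta> * (u t * v t) + \<eta> * (u t * v (t+\<eta>)) + \<eta> * (u t * v t)" by (simp add: algebra_simps)
        also have "\<dots> \<le> \<eta> * M + \<eta> * M + \<eta> * M"
          using m1 m2 h0 by (intro add_mono mult_left_mono) auto
        also have "\<dots> \<le> \<epsilon>" using M3 by (simp add: algebra_simps)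
        finally have "v t * (\<eta> * u t) + u t * (\<eta> * v (t+\<eta>)) + (u t * v t) * \<eta> \<le> \<epsilon>" .
        then show ?thesis using col_near[OF adm P h0, of t] by (meson ennreal_leI order_trans)
      qed
    qed
    show "(\<forall>x. (\<integral>\<^sup>+t. ennreal \<bar>green u v (x+\<eta>) t - green u v x t\<bar> \<partial>lborel) \<le> ennreal \<epsilon>) \<and>
     (\<forall>t. (\<integral>\<^sup>+x. ennreal \<bar>green u v (x+\<eta>) t - green u v x t\<bar> \<partial>lborel) \<le> ennreal \<epsilon>)"
      using rowb colb by blast
  qed
qed

end


lemma young_pt:
  fixes F l p :: real
  assumes p: "1 \<le> p" and F: "0 \<le> F" and l: "0 < l"
  shows "F \<le> (1/p) * (l powr (1-p) * F powr p) + (1 - 1/p) * l"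
proof (cases "p = 1 \<or> F = 0")
  case True
  then show ?thesis
  proof
    assume "p = 1" then show ?thesis using F l by simp
  next
    assume "F = 0" then show ?thesis using p l by (simp add: divide_le_eq_1)
  qed
next
  case False
  then have p1: "1 < p" and Fp: "0 < F" using p F by auto
  let ?a = "l powr (1-p) * F powr p"
  have apos: "0 < ?a" using l Fp by simp
  have "?a powr (1/p) * l powr (1 - 1/p) \<le> (1/p) * ?a + (1 - 1/p) * l"
    by (rule Youngs_inequality_0) (use p1 apos l in auto)
  moreover have "?a powr (1/p) * l powr (1 - 1/p) = F"
  proof -
    have "?a powr (1/p) = l powr ((1-p)/p) * F"
      using l Fp p1 by (simp add: powr_mult powr_powr)
    then have "?a powr (1/p) * l powr (1 - 1/p) = (l powr ((1-p)/p) * l powr (1 - 1/p)) * F"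
      by (simp add: algebra_simps)
    also have "l powr ((1-p)/p) * l powr (1 - 1/p) = l powr ((1-p)/p + (1 - 1/p))"
      using l by (simp add: powr_add)
    also have "(1-p)/p + (1 - 1/p) = 0" using p1 by (simp add: field_simps)
    finally show ?thesis using l by simp
  qed
  ultimately show ?thesis by simp
qed

lemma holder_pt:
  fixes k F :: "real \<Rightarrow> real"
  assumes p: "1 \<le> p" and k0: "\<And>t. 0 \<le> k t" and F0: "\<And>t. 0 \<le> F t"
    and [measurable]: "k \<in> borel_measurable borel" "F \<in> borel_measurable borel"
    and ik: "integrable lborel k" and ikF: "integrable lborel (\<lambda>t. k t * F t)"
    and A: "(\<integral>t. k t \<partial>lborel) \<le> a" and a: "0 < a"
  shows "ennreal ((\<integral>t. k t * F t \<partial>lborel) powr p)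
     \<le> ennreal (a powr (p-1)) * (\<integral>\<^sup>+t. ennreal (k t * F t powr p) \<partial>lborel)"
proof -
  define I where "I = (\<integral>t. k t * F t \<partial>lborel)"
  have I0: "0 \<le> I" unfolding I_def using k0 F0 by (intro integral_nonneg_AE) auto
  show ?thesis
  proof (cases "I = 0")
    case True
    then show ?thesis unfolding I_def[symmetric] by simp
  next
    case False
    then have Ip: "0 < I" using I0 by simp
    show ?thesis
    proof (cases "(\<integral>\<^sup>+t. ennreal (k t * F t powr p) \<partial>lborel) = \<infinity>")
      case True
      have "ennreal (a powr (p-1)) \<noteq> 0" using a by simp
      then show ?thesis using True by (simp add: ennreal_mult_top)
    next
      case False
      have iB: "integrable lborel (\<lambda>t. k t * F t powr p)"
        by (rule integrableI_nonneg) (use False k0 in \<open>auto simp: top.not_eq_extremum\<close>)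
      define B where "B = (\<integral>t. k t * F t powr p \<partial>lborel)"
      have Beq: "(\<integral>\<^sup>+t. ennreal (k t * F t powr p) \<partial>lborel) = ennreal B"
        unfolding B_def by (rule nn_integral_eq_integral[OF iB]) (use k0 in auto)
      have B0: "0 \<le> B" unfolding B_def using k0 by (intro integral_nonneg_AE) auto
      define l where "l = I / a"
      have l: "0 < l" unfolding l_def using Ip a by simp
      have "I \<le> (\<integral>t. (1/p) * l powr (1-p) * (k t * F t powr p) + (1 - 1/p) * l * k t \<partial>lborel)"
        unfolding I_def
      proof (rule integral_mono)
        show "integrable lborel (\<lambda>t. k t * F t)" by (rule ikF)
        show "integrable lborel (\<lambda>t. (1/p) * l powr (1-p) * (k t * F t powr p) + (1 - 1/p) * l * k t)"
          using iB ik by auto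
        fix t
        have "F t \<le> (1/p) * (l powr (1-p) * F t powr p) + (1 - 1/p) * l"
          by (rule young_pt[OF p F0 l])
        then have "k t * F t \<le> k t * ((1/p) * (l powr (1-p) * F t powr p) + (1 - 1/p) * l)"
          using k0[of t] by (rule mult_left_mono)
        then show "k t * F t \<le> (1/p) * l powr (1-p) * (k t * F t powr p) + (1 - 1/p) * l * k t"
          by (simp add: algebra_simps)
      qed
      also have "\<dots> = (1/p) * l powr (1-p) * B + (1 - 1/p) * l * (\<integral>t. k t \<partial>lborel)"
        unfolding B_def using iB ik by simp
      also have "\<dots> \<le> (1/p) * l powr (1-p) * B + (1 - 1/p) * l * a"
        using A l p by (intro add_left_mono mult_left_mono) (auto simp: field_simps)
      also have "(1 - 1/p) * l * a = (1 - 1/p) * I" unfolding l_def using a by simp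
      finally have "I / p \<le> (1/p) * l powr (1-p) * B" by (simp add: algebra_simps)
      then have i1: "I \<le> l powr (1-p) * B" using p by (simp add: field_simps)
      have "l powr (1-p) = I powr (1-p) * a powr (p-1)"
      proof -
        have "(I/a) powr (1-p) = I powr (1-p) / a powr (1-p)" using Ip a by (simp add: powr_divide)
        moreover have "a powr (p-1) = inverse (a powr (1-p))" by (metis minus_diff_eq powr_minus)
        ultimately show ?thesis unfolding l_def by (simp add: divide_inverse)
      qed
      then have "I \<le> I powr (1-p) * a powr (p-1) * B" using i1 by simp
      then have "I powr (p-1) * I \<le> I powr (p-1) * (I powr (1-p) * a powr (p-1) * B)"
        using Ip by (intro mult_left_mono) auto
      also have "I powr (p-1) * (I powr (1-p) * a powr (p-1) * B) = (I powr (p-1) * I powr (1-p)) * (a powr (p-1) * B)"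
        by (simp add: algebra_simps)
      also have "I powr (p-1) * I powr (1-p) = 1" using Ip by (simp add: powr_add[symmetric])
      also have "I powr (p-1) * I = I powr p"
      proof -
        have "I powr (p-1) * I = I powr (p-1) * I powr 1" using Ip by simp
        also have "\<dots> = I powr p" using powr_add[of I "p-1" 1] by simp
        finally show ?thesis .
      qed
      finally have "I powr p \<le> a powr (p-1) * B" by simp
      then have "ennreal (I powr p) \<le> ennreal (a powr (p-1) * B)" by (rule ennreal_leI)
      also have "\<dots> = ennreal (a powr (p-1)) * ennreal B" using B0 a by (simp add: ennreal_mult)
      finally show ?thesis unfolding I_def Beq .
    qed
  qed
qed



lemma le_one_powr: "1 \<le> p \<Longrightarrow> 0 \<le> (z::real) \<Longrightarrow> z \<le> 1 + z powr p"
proof (cases "z \<le> 1")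
  case False
  assume "1 \<le> p" "0 \<le> z"
  then have "z powr 1 \<le> z powr p" using False by (intro powr_mono) auto
  then show ?thesis using False by simp
qed (auto intro: add_increasing2)


context
  fixes q u u' v v' :: "real \<Rightarrow> real"
  assumes adm: "admissible_q q" and P: "PFSS q u u' v v'"
begin

lemmas measI[measurable] = meas[OF adm P]
lemmas gmI[measurable] = green_meas1[OF adm P] green_meas0[OF adm P]

lemma int_Gf:
  assumes p: "1 \<le> p" and fm[measurable]: "f \<in> borel_measurable borel"
    and fL: "Lp_pow p f \<le> 1"
  shows "integrable lborel (\<lambda>t. green u v y t * f t)"
proof (rule integrableI_bounded)
  show "(\<lambda>t. green u v y t * f t) \<in> borel_measurable lborel" by measurable
  have "(\<integral>\<^sup>+t. ennreal (norm (green u v y t * f t)) \<partial>lborel)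
     \<le> (\<integral>\<^sup>+t. ennreal (green u v y t) + ennreal (u y * v y) * ennreal (\<bar>f t\<bar> powr p) \<partial>lborel)"
  proof (rule nn_integral_mono)
    fix t
    have g0: "0 \<le> green u v y t" by (rule green_nonneg[OF adm P])
    have "norm (green u v y t * f t) = green u v y t * \<bar>f t\<bar>" using g0 by (simp add: abs_mult)
    also have "\<dots> \<le> green u v y t * (1 + \<bar>f t\<bar> powr p)"
      using g0 le_one_powr[OF p, of "\<bar>f t\<bar>"] by (intro mult_left_mono) auto
    also have "\<dots> \<le> green u v y t + u y * v y * \<bar>f t\<bar> powr p"
      using mult_right_mono[OF green_le_diag[OF adm P, of y t], of "\<bar>f t\<bar> powr p"] by (simp add: algebra_simps)
    finally have "norm (green u v y t * f t) \<le> green u v y t + u y * v y * \<bar>f t\<bar> powr p" .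
    then have "ennreal (norm (green u v y t * f t)) \<le> ennreal (green u v y t + u y * v y * \<bar>f t\<bar> powr p)"
      by (rule ennreal_leI)
    also have "\<dots> = ennreal (green u v y t) + ennreal (u y * v y) * ennreal (\<bar>f t\<bar> powr p)"
      using g0 pos[OF adm P, of y] by (simp add: ennreal_plus[symmetric] ennreal_mult[symmetric] del: ennreal_plus)
    finally show "ennreal (norm (green u v y t * f t)) \<le> ennreal (green u v y t) + ennreal (u y * v y) * ennreal (\<bar>f t\<bar> powr p)" .
  qed
  also have "\<dots> = (\<integral>\<^sup>+t. ennreal (green u v y t) \<partial>lborel) + ennreal (u y * v y) * Lp_pow p f"
    unfolding Lp_pow_def by (simp add: nn_integral_add nn_integral_cmult)
  also have "\<dots> < \<infinity>"
    using green_nn_fin[OF adm P, of y] fL by (simp add: ennreal_mult_less_top top.not_eq_extremum order_le_less_trans)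
  finally show "(\<integral>\<^sup>+t. ennreal (norm (green u v y t * f t)) \<partial>lborel) < \<infinity>" .
qed

lemma main_bound:
  assumes p: "1 \<le> p" and e: "0 < \<epsilon>" and fm[measurable]: "f \<in> borel_measurable borel"
    and fL: "Lp_pow p f \<le> 1"
    and row: "\<forall>x. (\<integral>\<^sup>+t. ennreal \<bar>green u v (x+\<eta>) t - green u v x t\<bar> \<partial>lborel) \<le> ennreal \<epsilon>"
    and col: "\<forall>t. (\<integral>\<^sup>+x. ennreal \<bar>green u v (x+\<eta>) t - green u v x t\<bar> \<partial>lborel) \<le> ennreal \<epsilon>"
  shows "Lp_pow p (\<lambda>x. green_op u v f (x + \<eta>) - green_op u v f x) \<le> ennreal (\<epsilon> powr p)"
proof -
  define K where "K x t = green u v (x+\<eta>) t - green u v x t" for x t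
  define H where "H x t = ennreal (\<bar>K x t\<bar> * \<bar>f t\<bar> powr p)" for x t
  have Km: "(\<lambda>(x,t). H x t) \<in> borel_measurable (lborel \<Otimes>\<^sub>M lborel)"
    unfolding H_def K_def green_def by measurable
  have Hm: "(\<lambda>x. \<integral>\<^sup>+t. H x t \<partial>lborel) \<in> borel_measurable lborel"
    using lborel.borel_measurable_nn_integral[of "\<lambda>x t. H x t" lborel] Km by simp
  have pt: "ennreal (\<bar>green_op u v f (x + \<eta>) - green_op u v f x\<bar> powr p)
      \<le> ennreal (\<epsilon> powr (p-1)) * (\<integral>\<^sup>+t. H x t \<partial>lborel)" for x
  proof -
    have i1: "integrable lborel (\<lambda>t. green u v (x+\<eta>) t * f t)" by (rule int_Gf[OF p fm fL])
    have i2: "integrable lborel (\<lambda>t. green u v x t * f t)" by (rule int_Gf[OF p fm fL])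
    have D: "green_op u v f (x + \<eta>) - green_op u v f x = (\<integral>t. K x t * f t \<partial>lborel)"
      unfolding green_op_def K_def by (simp add: left_diff_distrib Bochner_Integration.integral_diff[OF i1 i2])
    have iKf: "integrable lborel (\<lambda>t. K x t * f t)"
      unfolding K_def using Bochner_Integration.integrable_diff[OF i1 i2] by (simp add: left_diff_distrib)
    have ik: "integrable lborel (\<lambda>t. \<bar>K x t\<bar>)"
      unfolding K_def using green_int[OF adm P] by (intro integrable_abs Bochner_Integration.integrable_diff) auto
    have ikF: "integrable lborel (\<lambda>t. \<bar>K x t\<bar> * \<bar>f t\<bar>)"
      using integrable_abs[OF iKf] by (simp add: abs_mult)
    have b1: "\<bar>green_op u v f (x + \<eta>) - green_op u v f x\<bar> \<le> (\<integral>t. \<bar>K x t\<bar> * \<bar>f t\<bar> \<partial>lborel)"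
      unfolding D by (rule integral_abs_bound_integral[OF iKf ikF]) (simp add: abs_mult)
    have "ennreal (\<integral>t. \<bar>K x t\<bar> \<partial>lborel) = (\<integral>\<^sup>+t. ennreal \<bar>K x t\<bar> \<partial>lborel)"
      by (rule nn_integral_eq_integral[OF ik, symmetric]) auto
    also have "\<dots> \<le> ennreal \<epsilon>" using row unfolding K_def by simp
    finally have A: "(\<integral>t. \<bar>K x t\<bar> \<partial>lborel) \<le> \<epsilon>" using e by (simp add: ennreal_le_iff)
    have "ennreal (\<bar>green_op u v f (x + \<eta>) - green_op u v f x\<bar> powr p)
        \<le> ennreal ((\<integral>t. \<bar>K x t\<bar> * \<bar>f t\<bar> \<partial>lborel) powr p)"
      using b1 p by (intro ennreal_leI powr_mono2) auto
    also have "\<dots> \<le> ennreal (\<epsilon> powr (p-1)) * (\<integral>\<^sup>+t. ennreal (\<bar>K x t\<bar> * \<bar>f t\<bar> powr p) \<partial>lborel)"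
      by (rule holder_pt[OF p _ _ _ _ ik ikF A e]) (auto simp: K_def green_def)
    finally show ?thesis unfolding H_def .
  qed
  have "Lp_pow p (\<lambda>x. green_op u v f (x + \<eta>) - green_op u v f x)
      \<le> (\<integral>\<^sup>+x. ennreal (\<epsilon> powr (p-1)) * (\<integral>\<^sup>+t. H x t \<partial>lborel) \<partial>lborel)"
    unfolding Lp_pow_def by (rule nn_integral_mono) (rule pt)
  also have "\<dots> = ennreal (\<epsilon> powr (p-1)) * (\<integral>\<^sup>+x. (\<integral>\<^sup>+t. H x t \<partial>lborel) \<partial>lborel)"
    by (rule nn_integral_cmult[OF Hm])
  also have "(\<integral>\<^sup>+x. (\<integral>\<^sup>+t. H x t \<partial>lborel) \<partial>lborel) = (\<integral>\<^sup>+t. (\<integral>\<^sup>+x. H x t \<partial>lborel) \<partial>lborel)"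
    by (rule lborel_pair.Fubini'[OF Km, symmetric])
  also have "\<dots> \<le> (\<integral>\<^sup>+t. ennreal \<epsilon> * ennreal (\<bar>f t\<bar> powr p) \<partial>lborel)"
  proof (rule nn_integral_mono)
    fix t
    have "(\<integral>\<^sup>+x. H x t \<partial>lborel) = (\<integral>\<^sup>+x. ennreal \<bar>K x t\<bar> * ennreal (\<bar>f t\<bar> powr p) \<partial>lborel)"
      unfolding H_def by (simp add: ennreal_mult)
    also have "\<dots> = (\<integral>\<^sup>+x. ennreal \<bar>K x t\<bar> \<partial>lborel) * ennreal (\<bar>f t\<bar> powr p)"
      by (rule nn_integral_multc) (simp add: K_def green_def)
    also have "\<dots> \<le> ennreal \<epsilon> * ennreal (\<bar>f t\<bar> powr p)"
      using col unfolding K_def by (intro mult_right_mono) auto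
    finally show "(\<integral>\<^sup>+x. H x t \<partial>lborel) \<le> ennreal \<epsilon> * ennreal (\<bar>f t\<bar> powr p)" .
  qed
  also have "\<dots> = ennreal \<epsilon> * Lp_pow p f"
    unfolding Lp_pow_def by (rule nn_integral_cmult) measurable
  also have "\<dots> \<le> ennreal \<epsilon> * 1" using fL by (rule mult_left_mono) auto
  finally have "Lp_pow p (\<lambda>x. green_op u v f (x + \<eta>) - green_op u v f x) \<le> ennreal (\<epsilon> powr (p-1)) * ennreal \<epsilon>"
    by (simp add: mult_left_mono)
  also have "\<dots> = ennreal (\<epsilon> powr p)"
  proof -
    have "\<epsilon> powr (p-1) * \<epsilon> = \<epsilon> powr p" using powr_add[of \<epsilon> "p-1" 1] e by simp
    then show ?thesis using e by (simp add: ennreal_mult[symmetric])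
  qed
  finally show ?thesis .
qed

end

declare measI[measurable del] gmI[measurable del]



context
  fixes q u u' v v' :: "real \<Rightarrow> real"
  assumes adm: "admissible_q q" and P: "PFSS q u u' v v'"
begin

lemma schur_all:
  assumes hyp: "((\<lambda>x. \<integral>t. green u v x t \<partial>lborel) \<longlongrightarrow> 0) at_infinity" and e: "0 < \<epsilon>"
  shows "\<exists>\<delta>>0. \<forall>\<eta>. \<bar>\<eta>\<bar> < \<delta> \<longrightarrow>
     (\<forall>x. (\<integral>\<^sup>+t. ennreal \<bar>green u v (x+\<eta>) t - green u v x t\<bar> \<partial>lborel) \<le> ennreal \<epsilon>) \<and>
     (\<forall>t. (\<integral>\<^sup>+x. ennreal \<bar>green u v (x+\<eta>) t - green u v x t\<bar> \<partial>lborel) \<le> ennreal \<epsilon>)"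
proof -
  obtain \<delta> where d: "\<delta> > 0" and kb: "\<And>\<eta>. 0 < \<eta> \<Longrightarrow> \<eta> < \<delta> \<Longrightarrow>
     (\<forall>x. (\<integral>\<^sup>+t. ennreal \<bar>green u v (x+\<eta>) t - green u v x t\<bar> \<partial>lborel) \<le> ennreal \<epsilon>) \<and>
     (\<forall>t. (\<integral>\<^sup>+x. ennreal \<bar>green u v (x+\<eta>) t - green u v x t\<bar> \<partial>lborel) \<le> ennreal \<epsilon>)"
    using kernel_small[OF adm P hyp e] by blast
  show ?thesis
  proof (rule exI[of _ \<delta>], rule conjI[OF d], rule allI, rule impI)
    fix \<eta> :: real assume h: "\<bar>\<eta>\<bar> < \<delta>"
    consider "0 < \<eta>" | "\<eta> = 0" | "\<eta> < 0" by linarith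
    then show "(\<forall>x. (\<integral>\<^sup>+t. ennreal \<bar>green u v (x+\<eta>) t - green u v x t\<bar> \<partial>lborel) \<le> ennreal \<epsilon>) \<and>
     (\<forall>t. (\<integral>\<^sup>+x. ennreal \<bar>green u v (x+\<eta>) t - green u v x t\<bar> \<partial>lborel) \<le> ennreal \<epsilon>)"
    proof cases
      case 1
      then show ?thesis using kb h by auto
    next
      case 2
      then show ?thesis by simp
    next
      case 3
      define \<eta>' where "\<eta>' = - \<eta>"
      have h': "0 < \<eta>'" "\<eta>' < \<delta>" using 3 h unfolding \<eta>'_def by auto
      note kb' = kb[OF h']
      have r: "(\<integral>\<^sup>+t. ennreal \<bar>green u v (x+\<eta>) t - green u v x t\<bar> \<partial>lborel) \<le> ennreal \<epsilon>" for x
      proof -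
        have "(\<integral>\<^sup>+t. ennreal \<bar>green u v (x+\<eta>) t - green u v x t\<bar> \<partial>lborel)
            = (\<integral>\<^sup>+t. ennreal \<bar>green u v ((x+\<eta>)+\<eta>') t - green u v (x+\<eta>) t\<bar> \<partial>lborel)"
          unfolding \<eta>'_def by (simp add: abs_minus_commute)
        also have "\<dots> \<le> ennreal \<epsilon>" using kb' by blast
        finally show ?thesis .
      qed
      have c: "(\<integral>\<^sup>+x. ennreal \<bar>green u v (x+\<eta>) t - green u v x t\<bar> \<partial>lborel) \<le> ennreal \<epsilon>" for t
      proof -
        define F where "F y = ennreal \<bar>green u v (y+\<eta>') t - green u v y t\<bar>" for y
        have Fm: "F \<in> borel_measurable borel" unfolding F_def green_def using meas[OF adm P] by measurable
        have "(\<integral>\<^sup>+x. ennreal \<bar>green u v (x+\<eta>) t - green u v x t\<bar> \<partial>lborel) = (\<integral>\<^sup>+x. F (x + \<eta>) \<partial>lborel)"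
          unfolding F_def \<eta>'_def by (simp add: abs_minus_commute)
        also have "\<dots> = (\<integral>\<^sup>+x. F x \<partial>lborel)" by (rule shift_nn[OF adm P Fm])
        also have "\<dots> \<le> ennreal \<epsilon>" unfolding F_def using kb' by blast
        finally show ?thesis .
      qed
      show ?thesis using r c by blast
    qed
  qed
qed

end

theorem lemma5p5:
  fixes q u u' v v' :: "real \<Rightarrow> real" and p :: real
  assumes "admissible_q q"
    and "PFSS q u u' v v'"
    and "1 \<le> p"
    and "((\<lambda>x. \<integral>t. green u v x t \<partial>lborel) \<longlongrightarrow> 0) at_infinity"
  shows "\<forall>\<epsilon>>0. \<exists>\<delta>>0. \<forall>\<eta>. \<bar>\<eta>\<bar> < \<delta> \<longrightarrow>
           (\<forall>f. f \<in> borel_measurable lborel \<and> Lp_pow p f \<le> 1 \<longrightarrow>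
              Lp_pow p (\<lambda>x. green_op u v f (x + \<eta>) - green_op u v f x) \<le> ennreal (\<epsilon> powr p))"
proof (intro allI impI)
  fix \<epsilon> :: real assume e: "0 < \<epsilon>"
  obtain \<delta> where d: "\<delta> > 0" and sb: "\<And>\<eta>. \<bar>\<eta>\<bar> < \<delta> \<Longrightarrow>
     (\<forall>x. (\<integral>\<^sup>+t. ennreal \<bar>green u v (x+\<eta>) t - green u v x t\<bar> \<partial>lborel) \<le> ennreal \<epsilon>) \<and>
     (\<forall>t. (\<integral>\<^sup>+x. ennreal \<bar>green u v (x+\<eta>) t - green u v x t\<bar> \<partial>lborel) \<le> ennreal \<epsilon>)"
    using schur_all[OF assms(1,2,4) e] by blast
  show "\<exists>\<delta>>0. \<forall>\<eta>. \<bar>\<eta>\<bar> < \<delta> \<longrightarrow>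
           (\<forall>f. f \<in> borel_measurable lborel \<and> Lp_pow p f \<le> 1 \<longrightarrow>
              Lp_pow p (\<lambda>x. green_op u v f (x + \<eta>) - green_op u v f x) \<le> ennreal (\<epsilon> powr p))"
  proof (intro exI[of _ \<delta>] conjI d allI impI)
    fix \<eta> f assume h: "\<bar>\<eta>\<bar> < \<delta>" and f: "f \<in> borel_measurable lborel \<and> Lp_pow p f \<le> 1"
    have fm: "f \<in> borel_measurable borel" using f by simp
    show "Lp_pow p (\<lambda>x. green_op u v f (x + \<eta>) - green_op u v f x) \<le> ennreal (\<epsilon> powr p)"
      using main_bound[OF assms(1,2,3) e fm] f sb[OF h] by blast
  qed
qed



end
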